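(* Let $n\ge1$ be a natural number, let $a,b,\alpha,\beta$ be variables (with $\beta a-\alpha b\neq0$), and write $\Psi_r(n)=\Psi\left(\begin{array}{cc|c} a & b & n \\ \alpha & \beta & r \end{array}\right)$, $\Phi_r(n)=\Phi\left(\begin{array}{cc|c} a & b & n \\ \alpha & \beta & r \end{array}\right)$. Let $E=a\frac{\partial}{\partial \alpha}+b\frac{\partial}{\partial \beta}$ (so $a,b$ are held constant). Then \[ \Psi_r(n)=-\frac{1}{\lfloor n/2\rfloor-r}\,E\,\Psi_{r+1}(n)\quad\text{for }0\le r\le\lfloor n/2\rfloor-1, \] \[ \Phi_r(n)=-\frac{1}{\lfloor (n-1)/2\rfloor-r}\,E\,\Phi_{r+1}(n)\quad\text{for }0\le r\le\lfloor (n-1)/2\rfloor-1. \]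
   Context: $\delta(m)=1$ for $m$ odd, $0$ for $m$ even; $\lfloor\cdot\rfloor$ is the floor. For indeterminates $a,b,\alpha,\beta$ and $n\ge1$, $\Psi\left(\begin{array}{cc|c} a & b & n \\ \alpha & \beta & r \end{array}\right)$ ($0\le r\le\lfloor n/2\rfloor$) and $\Phi\left(\begin{array}{cc|c} a & b & n \\ \alpha & \beta & r \end{array}\right)$ ($0\le r\le\lfloor (n-1)/2\rfloor$) are the unique polynomials in $\mathbb{Z}[a,b,\alpha,\beta]$ such that, identically in $x,y$, $(\beta a-\alpha b)^{\lfloor n/2\rfloor}\frac{x^n+y^n}{(x+y)^{\delta(n)}}=\sum_{r}\Psi\left(\begin{array}{cc|c} a & b & n \\ \alpha & \beta & r \end{array}\right)(\alpha x^2+\beta xy+\alpha y^2)^{\lfloor n/2\rfloor-r}(ax^2+bxy+ay^2)^r$ and $(\beta a-\alpha b)^{\lfloor (n-1)/2\rfloor}\frac{x^n-y^n}{(x-y)(x+y)^{\delta(n-1)}}=\sum_{r}\Phi\left(\begin{array}{cc|c} a & b & n \\ \alpha & \beta & r \end{array}\right)(\alpha x^2+\beta xy+\alpha y^2)^{\lfloor (n-1)/2\rfloor-r}(ax^2+bxy+ay^2)^r$. *)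

theory Defs
  imports "HOL-Computational_Algebra.Polynomial"
begin

text \<open>The ring Z[a,b,alpha,beta] is represented by nested univariate polynomials:
  innermost variable a, then b, then alpha, outermost beta.\<close>

type_synonym mpoly4 = "int poly poly poly poly"

definition var_beta :: mpoly4 where "var_beta = [:0, 1:]"
definition var_alpha :: mpoly4 where "var_alpha = [:[:0, 1:]:]"
definition var_b :: mpoly4 where "var_b = [:[:[:0, 1:]:]:]"
definition var_a :: mpoly4 where "var_a = [:[:[:[:0, 1:]:]:]:]"

definition d_beta :: "mpoly4 \<Rightarrow> mpoly4" where "d_beta f = pderiv f"
definition d_alpha :: "mpoly4 \<Rightarrow> mpoly4" where "d_alpha f = map_poly pderiv f"

definition Eop :: "mpoly4 \<Rightarrow> mpoly4" where
  "Eop f = var_a * d_alpha f + var_b * d_beta f"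

text \<open>Polynomials in the indeterminates x (outer) and y (inner) over Z[a,b,alpha,beta].\<close>
type_synonym xypoly = "mpoly4 poly poly"

definition cxy :: "mpoly4 \<Rightarrow> xypoly" where "cxy c = [:[:c:]:]"
definition var_x :: xypoly where "var_x = [:0, 1:]"
definition var_y :: xypoly where "var_y = [:[:0, 1:]:]"

definition quad :: "mpoly4 \<Rightarrow> mpoly4 \<Rightarrow> xypoly" where
  "quad p q = cxy p * var_x ^ 2 + cxy q * var_x * var_y + cxy p * var_y ^ 2"

definition delta :: "nat \<Rightarrow> nat" where "delta m = (if odd m then 1 else 0)"

text \<open>Psi n r, for 0 <= r <= floor(n/2) (and 0 beyond), defined as the unique family of
  coefficients in the expansion; the division by (x+y)^delta(n) is cleared.\<close>
definition Psi :: "nat \<Rightarrow> nat \<Rightarrow> mpoly4" where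
  "Psi n = (THE f. (\<forall>r. n div 2 < r \<longrightarrow> f r = 0) \<and>
     cxy ((var_beta * var_a - var_alpha * var_b) ^ (n div 2)) * (var_x ^ n + var_y ^ n)
     = (var_x + var_y) ^ delta n *
       (\<Sum>r\<le>n div 2. cxy (f r) * quad var_alpha var_beta ^ (n div 2 - r) * quad var_a var_b ^ r))"

definition Phi :: "nat \<Rightarrow> nat \<Rightarrow> mpoly4" where
  "Phi n = (THE f. (\<forall>r. (n - 1) div 2 < r \<longrightarrow> f r = 0) \<and>
     cxy ((var_beta * var_a - var_alpha * var_b) ^ ((n - 1) div 2)) * (var_x ^ n - var_y ^ n)
     = (var_x - var_y) * (var_x + var_y) ^ delta (n - 1) *
       (\<Sum>r\<le>(n - 1) div 2. cxy (f r) * quad var_alpha var_beta ^ ((n - 1) div 2 - r) * quad var_a var_b ^ r))"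

end

theory Submission
  imports Defs
begin

definition is_der :: "('a::comm_ring_1 \<Rightarrow> 'a) \<Rightarrow> bool" where
  "is_der d \<longleftrightarrow> (\<forall>x y. d (x + y) = d x + d y) \<and> (\<forall>x y. d (x * y) = d x * y + x * d y)"

lemma der_add: "is_der d \<Longrightarrow> d (x + y) = d x + d y" by (simp add: is_der_def)
lemma der_mult: "is_der d \<Longrightarrow> d (x * y) = d x * y + x * d y" by (simp add: is_der_def)
lemma der_0: "is_der d \<Longrightarrow> d 0 = 0"
  using der_add[of d 0 0] by simp
lemma der_1: "is_der d \<Longrightarrow> d 1 = 0"
  using der_mult[of d 1 1] by simp
lemma der_minus: "is_der d \<Longrightarrow> d (- x) = - d x"
  using der_add[of d x "-x"] der_0[of d] by (simp add: eq_neg_iff_add_eq_0 add.commute)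
lemma der_diff: "is_der d \<Longrightarrow> d (x - y) = d x - d y"
  using der_add[of d x "-y"] der_minus[of d y] by simp
lemma der_sum: "is_der d \<Longrightarrow> d (sum f A) = (\<Sum>i\<in>A. d (f i))"
  by (induction A rule: infinite_finite_induct) (auto simp: der_0 der_add)
lemma der_power: "is_der d \<Longrightarrow> d (x ^ n) = of_nat n * x ^ (n - 1) * d x"
proof (induction n)
  case 0 then show ?case by (simp add: der_1)
next
  case (Suc n)
  then show ?case
    by (cases n) (auto simp: der_mult algebra_simps)
qed

lemma der_lincomb:
  assumes "is_der d1" "is_der d2"
  shows "is_der (\<lambda>f. A * d1 f + B * d2 f)"
  using assms unfolding is_der_def by (simp add: algebra_simps)

lemma der_pderiv: "is_der (pderiv :: 'a::idom poly \<Rightarrow> _)"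
  unfolding is_der_def by (simp add: pderiv_add pderiv_mult algebra_simps)

lemma der_map_poly:
  assumes d: "is_der d"
  shows "is_der (map_poly d)"
  unfolding is_der_def
proof (intro conjI allI)
  fix x y :: "'a poly"
  show "map_poly d (x + y) = map_poly d x + map_poly d y"
    by (intro poly_eqI) (simp add: coeff_map_poly der_0[OF d] der_add[OF d])
  show "map_poly d (x * y) = map_poly d x * y + x * map_poly d y"
    by (intro poly_eqI) (simp add: coeff_map_poly der_0[OF d] coeff_mult der_sum[OF d]
        der_mult[OF d] sum.distrib)
qed


lemma cxy_add: "cxy (p + q) = cxy p + cxy q" by (simp add: cxy_def)
lemma cxy_mult: "cxy (p * q) = cxy p * cxy q" by (simp add: cxy_def)
lemma cxy_minus: "cxy (- p) = - cxy p" by (simp add: cxy_def)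
lemma cxy_diff: "cxy (p - q) = cxy p - cxy q" by (simp add: cxy_def)
lemma cxy_0: "cxy 0 = 0" by (simp add: cxy_def)
lemma cxy_1: "cxy 1 = 1" by (simp add: cxy_def one_pCons)
lemma cxy_of_nat: "cxy (of_nat k) = of_nat k" by (simp add: cxy_def of_nat_poly)
lemma cxy_power: "cxy (p ^ k) = cxy p ^ k" by (induction k) (simp_all add: cxy_1 cxy_mult)
lemma cxy_eq0: "cxy p = 0 \<longleftrightarrow> p = 0" by (simp add: cxy_def)

lemmas cxy_simps = cxy_add cxy_mult cxy_minus cxy_diff cxy_0 cxy_1 cxy_of_nat cxy_power

lemma der_Eop: "is_der Eop"
proof -
  have "is_der d_alpha" unfolding d_alpha_def[abs_def] by (rule der_map_poly[OF der_pderiv])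
  moreover have "is_der d_beta" unfolding d_beta_def[abs_def] by (rule der_pderiv)
  ultimately show ?thesis unfolding Eop_def[abs_def] by (rule der_lincomb)
qed

lemma Eop_alpha: "Eop var_alpha = var_a"
  by (simp add: Eop_def d_alpha_def d_beta_def var_alpha_def map_poly_pCons pderiv_pCons one_pCons[symmetric])
lemma Eop_beta: "Eop var_beta = var_b"
  by (simp add: Eop_def d_alpha_def d_beta_def var_beta_def map_poly_pCons map_poly_1 pderiv_pCons one_pCons[symmetric])
lemma Eop_a: "Eop var_a = 0"
  by (simp add: Eop_def d_alpha_def d_beta_def var_a_def map_poly_pCons pderiv_pCons)
lemma Eop_b: "Eop var_b = 0"
  by (simp add: Eop_def d_alpha_def d_beta_def var_b_def map_poly_pCons pderiv_pCons)

definition Dm :: mpoly4 where "Dm = var_beta * var_a - var_alpha * var_b"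
definition QQ :: xypoly where "QQ = quad var_alpha var_beta"
definition PP :: xypoly where "PP = quad var_a var_b"

lemma Eop_D: "Eop Dm = 0"
  by (simp add: Dm_def der_diff[OF der_Eop] der_mult[OF der_Eop] Eop_alpha Eop_beta Eop_a Eop_b)

definition Ext :: "xypoly \<Rightarrow> xypoly" where "Ext = map_poly (map_poly Eop)"

lemma der_Ext: "is_der Ext"
  unfolding Ext_def by (intro der_map_poly der_Eop)

lemma Ext_cxy: "Ext (cxy c) = cxy (Eop c)"
  by (simp add: Ext_def cxy_def map_poly_pCons der_0[OF der_Eop])
lemma Ext_x: "Ext var_x = 0"
  by (simp add: Ext_def var_x_def map_poly_pCons map_poly_1 der_0[OF der_Eop] der_1[OF der_Eop] one_pCons[symmetric])
lemma Ext_y: "Ext var_y = 0"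
  by (simp add: Ext_def var_y_def map_poly_pCons map_poly_1 der_0[OF der_Eop] der_1[OF der_Eop] one_pCons[symmetric])

lemma Ext_quad: "Ext (quad p q) = quad (Eop p) (Eop q)"
  by (simp add: quad_def der_add[OF der_Ext] der_mult[OF der_Ext] der_power[OF der_Ext] Ext_cxy Ext_x Ext_y)

lemma Ext_Q: "Ext QQ = PP"
  by (simp add: QQ_def PP_def Ext_quad Eop_alpha Eop_beta)
lemma Ext_P: "Ext PP = 0"
  unfolding PP_def Ext_quad by (simp add: Eop_a Eop_b quad_def cxy_0)

lemma quad_eq: "quad p q = [:[:0,0,p:],[:0,q:],[:p:]:]"
  by (simp add: quad_def cxy_def var_x_def var_y_def power2_eq_square)

lemma Dm_nz: "Dm \<noteq> 0"
proof
  assume "Dm = 0"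
  hence "coeff Dm 1 = 0" by simp
  thus False by (simp add: Dm_def var_beta_def var_a_def var_alpha_def var_b_def)
qed

lemma a_nz: "var_a \<noteq> 0" by (simp add: var_a_def)
lemma P_nz: "PP \<noteq> 0" by (simp add: PP_def quad_eq a_nz)
lemma xpy_nz: "var_x + var_y \<noteq> 0" 
proof
  assume "var_x + var_y = 0"
  hence "coeff (var_x + var_y) 1 = 0" by simp
  thus False by (simp add: var_x_def var_y_def)
qed
lemma xmy_nz: "var_x - var_y \<noteq> 0" 
proof
  assume "var_x - var_y = 0"
  hence "coeff (var_x - var_y) 1 = 0" by simp
  thus False by (simp add: var_x_def var_y_def)
qed


definition Dx :: "xypoly \<Rightarrow> xypoly" where "Dx = pderiv"
definition Dy :: "xypoly \<Rightarrow> xypoly" where "Dy = map_poly pderiv"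

lemma der_Dx: "is_der Dx" unfolding Dx_def by (rule der_pderiv)
lemma der_Dy: "is_der Dy" unfolding Dy_def by (intro der_map_poly der_pderiv)

lemma Dx_cxy: "Dx (cxy c) = 0" by (simp add: Dx_def cxy_def pderiv_pCons)
lemma Dy_cxy: "Dy (cxy c) = 0" by (simp add: Dy_def cxy_def pderiv_pCons map_poly_pCons)
lemma Dx_x: "Dx var_x = 1" by (simp add: Dx_def var_x_def pderiv_pCons one_pCons)
lemma Dx_y: "Dx var_y = 0" by (simp add: Dx_def var_y_def pderiv_pCons)
lemma Dy_x: "Dy var_x = 0" by (simp add: Dy_def var_x_def pderiv_pCons map_poly_pCons map_poly_1 one_pCons[symmetric])
lemma Dy_y: "Dy var_y = 1" by (simp add: Dy_def var_y_def pderiv_pCons map_poly_pCons one_pCons)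

lemma Dx_quad: "Dx (quad p q) = cxy p * 2 * var_x + cxy q * var_y"
  by (simp add: quad_def der_add[OF der_Dx] der_mult[OF der_Dx] der_power[OF der_Dx] Dx_cxy Dx_x Dx_y)
lemma Dy_quad: "Dy (quad p q) = cxy q * var_x + cxy p * 2 * var_y"
  by (simp add: quad_def der_add[OF der_Dy] der_mult[OF der_Dy] der_power[OF der_Dy] Dy_cxy Dy_x Dy_y)

definition dl :: "xypoly \<Rightarrow> xypoly" where "dl h = Dy PP * Dx h + (- Dx PP) * Dy h"

lemma der_dl: "is_der dl"
  unfolding dl_def[abs_def] by (intro der_lincomb der_Dx der_Dy)

lemma dl_cxy: "dl (cxy c) = 0" by (simp add: dl_def Dx_cxy Dy_cxy)
lemma dl_P: "dl PP = 0" by (simp add: dl_def)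

lemma dl_Q: "dl QQ = - (2 * cxy Dm) * ((var_x - var_y) * (var_x + var_y))"
  unfolding dl_def QQ_def PP_def Dx_quad Dy_quad Dm_def cxy_simps
  by (simp add: algebra_simps power2_eq_square)

lemma dl_Q_nz: "dl QQ \<noteq> 0"
proof -
  have "(2::xypoly) \<noteq> 0"
    by (metis of_nat_numeral zero_neq_numeral of_nat_eq_0_iff)
  moreover have "cxy Dm \<noteq> 0" using Dm_nz by (simp add: cxy_eq0)
  ultimately show ?thesis unfolding dl_Q using xmy_nz xpy_nz by simp
qed

lemma uniq:
  "(\<Sum>r\<le>k. cxy (g r) * QQ^(k-r) * PP^r) = 0 \<Longrightarrow> r \<le> k \<Longrightarrow> g r = 0"
proof (induction k arbitrary: g r)
  case 0
  then show ?case by (simp add: cxy_eq0)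
next
  case (Suc k)
  define H where "H = (\<Sum>r\<le>Suc k. cxy (g r) * QQ^(Suc k-r) * PP^r)"
  have H0: "H = 0" using Suc.prems H_def by simp
  have t: "dl (cxy (g r) * QQ^(Suc k-r) * PP^r) =
      cxy (g r * of_nat (Suc k - r)) * QQ^(k - r) * PP^r * dl QQ" if "r \<le> k" for r
  proof -
    have "Suc k - r - 1 = k - r" using that by simp
    then show ?thesis
    by (simp add: der_mult[OF der_dl] der_power[OF der_dl] dl_cxy dl_P cxy_simps algebra_simps)
  qed
  have last: "dl (cxy (g (Suc k)) * QQ^(Suc k-Suc k) * PP^Suc k) = 0"
    by (simp add: der_mult[OF der_dl] der_power[OF der_dl] dl_cxy dl_P)
  have "dl H = (\<Sum>r\<le>k. cxy (g r * of_nat (Suc k - r)) * QQ^(k - r) * PP^r) * dl QQ"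
    unfolding H_def der_sum[OF der_dl] atMost_Suc sum.insert[OF finite_atMost, of "Suc k", simplified]
    using t last by (simp add: sum_distrib_right)
  with H0 have S0: "(\<Sum>r\<le>k. cxy (g r * of_nat (Suc k - r)) * QQ^(k - r) * PP^r) = 0"
    using dl_Q_nz der_0[OF der_dl] by simp
  hence low: "g r = 0" if "r \<le> k" for r
  proof -
    have "g r * of_nat (Suc k - r) = 0"
      using Suc.IH[of "\<lambda>r. g r * of_nat (Suc k - r)" r] that S0 by blast
    moreover have "(of_nat (Suc k - r) :: mpoly4) \<noteq> 0" using that by (simp only: of_nat_eq_0_iff)
    ultimately show ?thesis by simp
  qed
  have "H = cxy (g (Suc k)) * PP ^ Suc k"
    unfolding H_def atMost_Suc sum.insert[OF finite_atMost, of "Suc k", simplified]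
    using low by (simp add: cxy_0)
  with H0 have "g (Suc k) = 0" using P_nz by (simp add: cxy_eq0)
  with low Suc.prems(2) show ?case by (cases "r \<le> k") (auto simp: le_Suc_eq)
qed


definition hsum :: "nat \<Rightarrow> (nat \<Rightarrow> mpoly4) \<Rightarrow> xypoly" where
  "hsum k c = (\<Sum>r\<le>k. cxy (c r) * QQ^(k-r) * PP^r)"

definition isrep :: "nat \<Rightarrow> xypoly \<Rightarrow> bool" where
  "isrep k H \<longleftrightarrow> (\<exists>c. (\<forall>r. k < r \<longrightarrow> c r = 0) \<and> H = hsum k c)"

lemma isrep_const: "isrep 0 (cxy p)"
  unfolding isrep_def hsum_def by (rule exI[of _ "\<lambda>r. if r = 0 then p else 0"]) simp

lemma isrep_add: "isrep k H \<Longrightarrow> isrep k G \<Longrightarrow> isrep k (H + G)"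
  unfolding isrep_def hsum_def
  apply (elim exE conjE)
  subgoal for c d
    by (rule exI[of _ "\<lambda>r. c r + d r"]) (simp add: cxy_add sum.distrib algebra_simps)
  done

lemma isrep_smult: "isrep k H \<Longrightarrow> isrep k (cxy p * H)"
  unfolding isrep_def hsum_def
  apply (elim exE conjE)
  subgoal for c
    by (rule exI[of _ "\<lambda>r. p * c r"]) (simp add: cxy_mult sum_distrib_left algebra_simps)
  done

lemma isrep_Q: "isrep k H \<Longrightarrow> isrep (Suc k) (QQ * H)"
  unfolding isrep_def
  apply (elim exE conjE)
  subgoal for c
  proof (rule exI[of _ c], intro conjI)
    assume c: "\<forall>r. k < r \<longrightarrow> c r = 0" and H: "H = hsum k c"
    show "\<forall>r. Suc k < r \<longrightarrow> c r = 0" using c by simp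
    have "QQ * H = (\<Sum>r\<le>k. cxy (c r) * QQ^(Suc k-r) * PP^r)"
      unfolding H hsum_def sum_distrib_left
      by (rule sum.cong) (auto simp: Suc_diff_le algebra_simps)
    also have "\<dots> = hsum (Suc k) c"
      unfolding hsum_def by (simp add: c cxy_0)
    finally show "QQ * H = hsum (Suc k) c" .
  qed
  done

lemma isrep_P: "isrep k H \<Longrightarrow> isrep (Suc k) (PP * H)"
  unfolding isrep_def
  apply (elim exE conjE)
  subgoal for c
  proof (rule exI[of _ "\<lambda>r. case r of 0 \<Rightarrow> 0 | Suc i \<Rightarrow> c i"], intro conjI)
    assume c: "\<forall>r. k < r \<longrightarrow> c r = 0" and H: "H = hsum k c"
    show "\<forall>r. Suc k < r \<longrightarrow> (case r of 0 \<Rightarrow> 0 | Suc i \<Rightarrow> c i) = 0" using c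
      by (auto split: nat.split)
    have "PP * H = (\<Sum>r\<le>k. cxy (c r) * QQ^(Suc k - Suc r) * PP^Suc r)"
      unfolding H hsum_def sum_distrib_left
      by (rule sum.cong) (auto simp: algebra_simps)
    also have "\<dots> = hsum (Suc k) (\<lambda>r. case r of 0 \<Rightarrow> 0 | Suc i \<Rightarrow> c i)"
      unfolding hsum_def sum.atMost_Suc_shift by (simp add: cxy_0)
    finally show "PP * H = hsum (Suc k) (\<lambda>r. case r of 0 \<Rightarrow> 0 | Suc i \<Rightarrow> c i)" .
  qed
  done

lemma isrep_lin: "isrep k H \<Longrightarrow> isrep (Suc k) ((cxy p * QQ + cxy q * PP) * H)"
  by (simp add: distrib_right mult.assoc isrep_add isrep_smult isrep_Q isrep_P)

lemma isrep_diff: "isrep k H \<Longrightarrow> isrep k G \<Longrightarrow> isrep k (H - G)"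
  using isrep_add[of k H "cxy (-1) * G"] isrep_smult[of k G "-1"] by (simp add: cxy_simps)

definition uu :: xypoly where "uu = var_x^2 + var_y^2"
definition vv :: xypoly where "vv = var_x * var_y"

fun Wseq :: "mpoly4 \<Rightarrow> mpoly4 \<Rightarrow> nat \<Rightarrow> xypoly" where
  "Wseq c0 e 0 = cxy c0"
| "Wseq c0 e (Suc 0) = uu + cxy e * vv"
| "Wseq c0 e (Suc (Suc k)) = uu * Wseq c0 e (Suc k) - vv^2 * Wseq c0 e k"

lemma Du_eq: "cxy Dm * (uu + cxy e * vv) = cxy (e*var_a - var_b) * QQ + cxy (var_beta - e*var_alpha) * PP"
  unfolding Dm_def QQ_def PP_def quad_def uu_def vv_def cxy_simps
  by (simp add: algebra_simps power2_eq_square)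

lemma Wseq_rep: "isrep k (cxy (Dm^k) * Wseq c0 e k)"
proof (induction c0 e k rule: Wseq.induct)
  case (1 c0 e)
  then show ?case by (simp add: cxy_simps isrep_const)
next
  case (2 c0 e)
  have "isrep (Suc 0) ((cxy (e*var_a - var_b) * QQ + cxy (var_beta - e*var_alpha) * PP) * 1)"
    by (rule isrep_lin) (metis isrep_const cxy_1)
  then show ?case by (simp add: Du_eq)
next
  case (3 c0 e k)
  define L1 where "L1 = cxy (0*var_a - var_b) * QQ + cxy (var_beta - 0*var_alpha) * PP"
  have L1: "cxy Dm * uu = L1" using Du_eq[of 0] by (simp add: L1_def cxy_0)
  define L2 where "L2 = cxy (var_a) * QQ + cxy (- var_alpha) * PP"
  have L2: "cxy Dm * vv = L2" unfolding L2_def Dm_def QQ_def PP_def quad_def uu_def vv_def cxy_simps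
    by (simp add: algebra_simps power2_eq_square)
  have "cxy (Dm ^ Suc (Suc k)) * Wseq c0 e (Suc (Suc k)) =
     (cxy Dm * uu) * (cxy (Dm ^ Suc k) * Wseq c0 e (Suc k)) - (cxy Dm * vv) * ((cxy Dm * vv) * (cxy (Dm^k) * Wseq c0 e k))"
    by (simp add: cxy_simps algebra_simps power2_eq_square)
  also have "\<dots> = L1 * (cxy (Dm ^ Suc k) * Wseq c0 e (Suc k)) - L2 * (L2 * (cxy (Dm^k) * Wseq c0 e k))"
    by (simp add: L1 L2)
  finally have eq: "cxy (Dm ^ Suc (Suc k)) * Wseq c0 e (Suc (Suc k)) = L1 * (cxy (Dm ^ Suc k) * Wseq c0 e (Suc k)) - L2 * (L2 * (cxy (Dm^k) * Wseq c0 e k))" .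
  show ?case unfolding eq L1_def L2_def
    by (intro isrep_diff isrep_lin 3)
qed

lemma rec_id: "(x^2 + y^2) * (x^(j+2) + s * y^(j+2)) - (x*y)^2 * (x^j + s * y^j) = x^(j+4) + s * y^(j+4)"
  for x y s :: "'a::comm_ring_1"
  by (simp add: power_add algebra_simps power2_eq_square numeral_eq_Suc)


lemma Wseq_closed:
  assumes h0: "pre * Wseq c0 e 0 = var_x^j0 + s * var_y^j0"
      and h1: "pre * Wseq c0 e 1 = var_x^(j0+2) + s * var_y^(j0+2)"
  shows "pre * Wseq c0 e k = var_x^(j0+2*k) + s * var_y^(j0+2*k)"
proof -
  have "pre * Wseq c0 e k = var_x^(j0+2*k) + s * var_y^(j0+2*k) \<and>
        pre * Wseq c0 e (Suc k) = var_x^(j0+2*k+2) + s * var_y^(j0+2*k+2)"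
  proof (induction k)
    case 0 then show ?case using h0 h1 by simp
  next
    case (Suc k)
    have "pre * Wseq c0 e (Suc (Suc k)) = uu * (pre * Wseq c0 e (Suc k)) - vv^2 * (pre * Wseq c0 e k)"
      by (simp add: algebra_simps)
    also have "\<dots> = var_x^(j0+2*k+4) + s * var_y^(j0+2*k+4)"
      using Suc.IH rec_id[of var_x var_y "j0+2*k" s] unfolding uu_def vv_def by (simp add: add.assoc)
    finally have "pre * Wseq c0 e (Suc (Suc k)) = var_x^(j0+2*k+4) + s * var_y^(j0+2*k+4)" .
    moreover have "j0 + 2 * Suc k = j0+2*k+2" "j0 + 2 * Suc k + 2 = j0+2*k+4" by simp_all
    ultimately show ?case using Suc.IH by metis
  qed
  then show ?thesis by blast
qed

lemma cxy_2: "cxy 2 = 2" using cxy_of_nat[of 2] by simp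

lemma psi_even: "1 * Wseq 2 0 k = var_x^(2*k) + var_y^(2*k)"
  using Wseq_closed[of 1 2 0 0 1 k] by (simp add: cxy_2 cxy_0 uu_def power2_eq_square)
lemma psi_odd: "(var_x + var_y) * Wseq 1 (-1) k = var_x^(2*k+1) + var_y^(2*k+1)"
  using Wseq_closed[of "var_x + var_y" 1 "-1" 1 1 k]
  by (simp add: cxy_1 cxy_minus uu_def vv_def algebra_simps power2_eq_square power3_eq_cube)
lemma phi_even: "((var_x - var_y) * (var_x + var_y)) * Wseq 1 0 k = var_x^(2*k+2) - var_y^(2*k+2)"
  using Wseq_closed[of "(var_x - var_y) * (var_x + var_y)" 1 0 2 "-1" k]
  by (simp add: cxy_1 cxy_0 uu_def algebra_simps power2_eq_square numeral_eq_Suc)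
lemma phi_odd: "(var_x - var_y) * Wseq 1 1 k = var_x^(2*k+1) - var_y^(2*k+1)"
  using Wseq_closed[of "var_x - var_y" 1 1 1 "-1" k]
  by (simp add: cxy_1 uu_def vv_def algebra_simps power2_eq_square power3_eq_cube)


lemma ex1_coeffs:
  assumes pre: "pre \<noteq> 0" and W: "Wn = pre * Wseq c0 e m"
  shows "\<exists>!f. (\<forall>r. m < r \<longrightarrow> f r = 0) \<and>
     cxy (Dm ^ m) * Wn = pre * (\<Sum>r\<le>m. cxy (f r) * QQ ^ (m - r) * PP ^ r)"
proof -
  obtain c where c: "\<forall>r. m < r \<longrightarrow> c r = 0" "cxy (Dm ^ m) * Wseq c0 e m = hsum m c"
    using Wseq_rep[of m c0 e] unfolding isrep_def by blast
  show ?thesis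
  proof (rule ex1I[of _ c], intro conjI)
    show "\<forall>r. m < r \<longrightarrow> c r = 0" by (fact c(1))
    show "cxy (Dm ^ m) * Wn = pre * (\<Sum>r\<le>m. cxy (c r) * QQ ^ (m - r) * PP ^ r)"
      using c(2) unfolding W hsum_def by (simp add: algebra_simps)
  next
    fix g assume g: "(\<forall>r. m < r \<longrightarrow> g r = 0) \<and>
     cxy (Dm ^ m) * Wn = pre * (\<Sum>r\<le>m. cxy (g r) * QQ ^ (m - r) * PP ^ r)"
    have "pre * hsum m c = cxy (Dm ^ m) * Wn" using c(2) unfolding W by (simp add: algebra_simps)
    also have "\<dots> = pre * hsum m g" using g unfolding hsum_def by simp
    finally have "pre * hsum m g = pre * hsum m c" by (rule sym)
    hence "hsum m g = hsum m c" using pre by simp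
    hence "hsum m (\<lambda>r. g r - c r) = 0"
      unfolding hsum_def by (simp add: cxy_diff algebra_simps sum_subtractf)
    hence "g r - c r = 0" if "r \<le> m" for r using uniq[of "\<lambda>r. g r - c r" m r] that unfolding hsum_def by blast
    then show "g = c" using g c(1) by (intro ext) (metis not_le right_minus_eq)
  qed
qed

lemma Ext_term: "Ext (cxy c * QQ ^ k * PP ^ r) =
   cxy (Eop c) * QQ ^ k * PP ^ r + cxy (c * of_nat k) * QQ ^ (k - 1) * PP ^ Suc r"
  by (simp add: der_mult[OF der_Ext] der_power[OF der_Ext] Ext_cxy Ext_Q Ext_P cxy_mult cxy_of_nat mult_ac)

lemma key:
  assumes pre: "pre \<noteq> 0" and W: "Wn = pre * Wseq c0 e m"
    and Epre: "Ext pre = 0" and EW: "Ext Wn = 0"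
    and r: "r + 1 \<le> m"
  shows "of_nat (m - r) * (THE f. (\<forall>r. m < r \<longrightarrow> f r = 0) \<and>
     cxy (Dm ^ m) * Wn = pre * (\<Sum>r\<le>m. cxy (f r) * QQ ^ (m - r) * PP ^ r)) r
    = - Eop ((THE f. (\<forall>r. m < r \<longrightarrow> f r = 0) \<and>
     cxy (Dm ^ m) * Wn = pre * (\<Sum>r\<le>m. cxy (f r) * QQ ^ (m - r) * PP ^ r)) (r + 1))"
    (is "_ * ?F r = - Eop (?F (r+1))")
proof -
  define f where "f = ?F"
  have fp: "(\<forall>r. m < r \<longrightarrow> f r = 0) \<and>
     cxy (Dm ^ m) * Wn = pre * (\<Sum>r\<le>m. cxy (f r) * QQ ^ (m - r) * PP ^ r)"
    unfolding f_def by (rule theI'[OF ex1_coeffs[OF pre W]])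
  define S where "S = (\<Sum>r\<le>m. cxy (f r) * QQ ^ (m - r) * PP ^ r)"
  have "Ext (cxy (Dm ^ m) * Wn) = 0"
    by (simp add: der_mult[OF der_Ext] Ext_cxy EW der_power[OF der_Eop] Eop_D cxy_0)
  moreover have "Ext (pre * S) = pre * Ext S"
    by (simp add: der_mult[OF der_Ext] Epre)
  ultimately have ES: "Ext S = 0" using fp pre unfolding S_def by simp
  obtain m' where m': "m = Suc m'" using r by (cases m) auto
  define g where "g r = Eop (f r) + (case r of 0 \<Rightarrow> 0 | Suc i \<Rightarrow> of_nat (m - i) * f i)" for r
  have sh: "(\<Sum>r\<le>m. cxy (case r of 0 \<Rightarrow> 0 | Suc i \<Rightarrow> of_nat (m - i) * f i) * QQ ^ (m - r) * PP ^ r)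
     = (\<Sum>r\<le>m'. cxy (f r * of_nat (m - r)) * QQ ^ (m' - r) * PP ^ Suc r)"
    unfolding m' sum.atMost_Suc_shift by (simp add: cxy_0 mult.commute)
  have e1: "Ext S = (\<Sum>r\<le>m. cxy (Eop (f r)) * QQ ^ (m - r) * PP ^ r)
       + (\<Sum>r\<le>m. cxy (f r * of_nat (m - r)) * QQ ^ (m - r - 1) * PP ^ Suc r)"
    unfolding S_def der_sum[OF der_Ext] sum.distrib[symmetric]
    by (rule sum.cong) (simp_all add: Ext_term)
  have e2: "(\<Sum>r\<le>m. cxy (f r * of_nat (m - r)) * QQ ^ (m - r - 1) * PP ^ Suc r)
      = (\<Sum>r\<le>m'. cxy (f r * of_nat (m - r)) * QQ ^ (m' - r) * PP ^ Suc r)"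
    unfolding m' atMost_Suc sum.insert[OF finite_atMost, of "Suc m'", simplified]
    by (simp add: cxy_0)
  have e3: "hsum m g = (\<Sum>r\<le>m. cxy (Eop (f r)) * QQ ^ (m - r) * PP ^ r) + 
     (\<Sum>r\<le>m. cxy (case r of 0 \<Rightarrow> 0 | Suc i \<Rightarrow> of_nat (m - i) * f i) * QQ ^ (m - r) * PP ^ r)"
    unfolding hsum_def g_def cxy_add distrib_right sum.distrib ..
  have "hsum m g = Ext S" unfolding e3 e1 e2 sh ..
  hence "hsum m g = 0" using ES by simp
  hence "g (r + 1) = 0" using uniq[of g m "r+1"] r unfolding hsum_def by blast
  thus ?thesis unfolding g_def f_def by (simp add: eq_neg_iff_add_eq_0 add.commute)
qed


lemma Ext_xy_pow: "Ext ((var_x + var_y)^j) = 0" "Ext ((var_x - var_y) * (var_x + var_y)^j) = 0"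
  "Ext (var_x^n + var_y^n) = 0" "Ext (var_x^n - var_y^n) = 0"
  by (simp_all add: der_mult[OF der_Ext] der_power[OF der_Ext] der_add[OF der_Ext] der_diff[OF der_Ext] Ext_x Ext_y)

theorem theorem8p2:
  fixes n r :: nat
  assumes "n \<ge> 1"
  shows "(r + 1 \<le> n div 2 \<longrightarrow>
            of_nat (n div 2 - r) * Psi n r = - Eop (Psi n (r + 1))) \<and>
         (r + 1 \<le> (n - 1) div 2 \<longrightarrow>
            of_nat ((n - 1) div 2 - r) * Phi n r = - Eop (Phi n (r + 1)))"
proof (intro conjI impI)
  assume r: "r + 1 \<le> n div 2"
  have Psi_eq: "Psi n = (THE f. (\<forall>r. n div 2 < r \<longrightarrow> f r = 0) \<and>
     cxy (Dm ^ (n div 2)) * (var_x^n + var_y^n) = (var_x+var_y)^delta n *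
       (\<Sum>r\<le>n div 2. cxy (f r) * QQ^(n div 2 - r) * PP^r))"
    unfolding Psi_def Dm_def QQ_def PP_def ..
  have pre: "(var_x+var_y)^delta n \<noteq> 0" using xpy_nz by simp
  obtain c0 e where W: "var_x^n + var_y^n = (var_x+var_y)^delta n * Wseq c0 e (n div 2)"
  proof (cases "even n")
    case True
    then obtain k where k: "n = 2 * k" by blast
    show ?thesis using that[of 2 0] psi_even[of k] by (simp add: k delta_def)
  next
    case False
    then obtain k where k: "n = 2 * k + 1" using oddE by blast
    show ?thesis using that[of 1 "-1"] psi_odd[of k] by (simp add: k delta_def)
  qed
  show "of_nat (n div 2 - r) * Psi n r = - Eop (Psi n (r + 1))"
    unfolding Psi_eq by (rule key[OF pre W Ext_xy_pow(1) Ext_xy_pow(3) r])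
next
  assume r: "r + 1 \<le> (n - 1) div 2"
  have Phi_eq: "Phi n = (THE f. (\<forall>r. (n - 1) div 2 < r \<longrightarrow> f r = 0) \<and>
     cxy (Dm ^ ((n - 1) div 2)) * (var_x^n - var_y^n) = (var_x - var_y) * (var_x+var_y)^delta (n - 1) *
       (\<Sum>r\<le>(n - 1) div 2. cxy (f r) * QQ^((n - 1) div 2 - r) * PP^r))"
    unfolding Phi_def Dm_def QQ_def PP_def ..
  have pre: "(var_x - var_y) * (var_x+var_y)^delta (n - 1) \<noteq> 0" using xpy_nz xmy_nz by simp
  obtain c0 e where W: "var_x^n - var_y^n = (var_x - var_y) * (var_x+var_y)^delta (n - 1) * Wseq c0 e ((n - 1) div 2)"
  proof (cases "even n")
    case True
    then obtain k where k: "n = 2 * k" by blast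
    with assms obtain j where j: "n = 2 * j + 2" by (cases k) auto
    show ?thesis using that[of 1 0] phi_even[of j] by (simp add: j delta_def)
  next
    case False
    then obtain k where k: "n = 2 * k + 1" using oddE by blast
    show ?thesis using that[of 1 1] phi_odd[of k] by (simp add: k delta_def)
  qed
  show "of_nat ((n - 1) div 2 - r) * Phi n r = - Eop (Phi n (r + 1))"
    unfolding Phi_eq by (rule key[OF pre W Ext_xy_pow(2) Ext_xy_pow(4) r])
qed

end
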